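(* Under the hypotheses of Theorem 4.1 (stated below), including the nondegeneracy assumption $\mathcal{L}^d(\{u=v\})=0$ for the limit $u$, one has, along the same subsequence $s\to1$, $$\chi_{\{u_s>v_s\}}\to\chi_{\{u>v\}}\quad\text{and}\quad\chi_{\{u_s<v_s\}}\to\chi_{\{u<v\}}\quad\text{strongly in }L^r(\Omega)\ \text{for every } r<\infty.$$
   Context: Setting (Theorem 4.1): $\Omega\subset\mathbb{R}^d$ bounded open, $1<p<\infty$ with $p'=p/(p-1)>p^\#_1$ (where $p^\#_1=dp/[d(p-1)+p]$ if $p<d$, $1$ if $p>d$, some fixed number $>1$ if $p=d$), $0<\sigma<1$. For $s\in(\sigma,1)$: $f_s,\lambda^s_\pm\in L^{p'}(\Omega)$, $\lambda^s_\pm\ge0$, $v_s\in L^p(\Omega)$, with $f_s\to f$, $\lambda^s_\pm\to\lambda_\pm$ in $L^{p'}(\Omega)$ and $v_s\to v$ in $L^p(\Omega)$ as $s\to 1$; $(u_s,\chi^s_>,\chi^s_<)$ is a solution of the two-phase problem for $(f_s,\lambda^s_\pm,v_s)$ with $-\Delta^s_p$, and along a subsequence $u_s\to u$ in $L^p(\Omega)$, $D^su_s\to Du$ in $L^p(\mathbb{R}^d;\mathbb{R}^d)$, where $u\in W^{1,p}_0(\Omega)$ is the solution component for the limit problem with $s=1$. Fractional gradient $D^s\varphi=D(I_{1-s}\varphi)$ with $I_{1-s}$ the Riesz potential of order $1-s$ (standard normalization), extended distributionally; $\Lambda^{s,p}_0(\Omega)$ is the closure of $C^\infty_c(\Omega)$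 in the norm $(\|f\|^p_{L^p}+\|D^sf\|^p_{L^p(\mathbb{R}^d)})^{1/p}$; $D^1=D$, $\Lambda^{1,p}_0=W^{1,p}_0$; $\langle-\Delta^s_p u,w\rangle=\int_{\mathbb{R}^d}|D^su|^{p-2}D^su\cdot D^sw$. Solution of the two-phase problem for $(f,\lambda_\pm,v)$: $(u,\chi_>,\chi_<)\in\Lambda^{s,p}_0(\Omega)\times L^\infty(\Omega)^2$ with $\chi_{\{u>v\}}\le\chi_>\le\chi_{\{u\ge v\}}$, $\chi_{\{u<v\}}\le\chi_<\le\chi_{\{u\le v\}}$ a.e., and $\int_{\mathbb{R}^d}|D^su|^{p-2}D^su\cdot D^sw+\int_\Omega(\lambda_+\chi_>-\lambda_-\chi_<)w=\int_\Omega fw$ for all $w\in\Lambda^{s,p}_0(\Omega)$. *)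

theory Defs
  imports "HOL-Analysis.Analysis"
begin

definition memLp :: "real \<Rightarrow> 'a::euclidean_space set \<Rightarrow> ('a \<Rightarrow> 'b::euclidean_space) \<Rightarrow> bool" where
  "memLp p S f \<longleftrightarrow> f \<in> borel_measurable (lebesgue_on S)
      \<and> integrable (lebesgue_on S) (\<lambda>x. norm (f x) powr p)"

definition Lp_conv :: "real \<Rightarrow> 'a::euclidean_space set \<Rightarrow> 'i filter
      \<Rightarrow> ('i \<Rightarrow> 'a \<Rightarrow> 'b::euclidean_space) \<Rightarrow> ('a \<Rightarrow> 'b) \<Rightarrow> bool" where
  "Lp_conv p S F g h \<longleftrightarrow> memLp p S h \<and> (\<forall>\<^sub>F i in F. memLp p S (g i))
      \<and> ((\<lambda>i. \<integral>\<^sup>+ x. ennreal (norm (g i x - h x) powr p) \<partial>lebesgue_on S) \<longlongrightarrow> 0) F"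

definition memLinf :: "'a::euclidean_space set \<Rightarrow> ('a \<Rightarrow> real) \<Rightarrow> bool" where
  "memLinf S f \<longleftrightarrow> f \<in> borel_measurable (lebesgue_on S)
      \<and> (\<exists>M. AE x in lebesgue_on S. \<bar>f x\<bar> \<le> M)"

definition dderiv :: "'a::euclidean_space \<Rightarrow> ('a \<Rightarrow> real) \<Rightarrow> 'a \<Rightarrow> real" where
  "dderiv b f = (\<lambda>x. frechet_derivative f (at x) b)"

definition smooth_fun :: "('a::euclidean_space \<Rightarrow> real) \<Rightarrow> bool" where
  "smooth_fun f \<longleftrightarrow> (\<forall>bs. set bs \<subseteq> Basis \<longrightarrow> (\<forall>x. foldr dderiv bs f differentiable (at x)))"

definition test_fun :: "'a::euclidean_space set \<Rightarrow> ('a \<Rightarrow> real) \<Rightarrow> bool" where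
  "test_fun \<Omega> \<phi> \<longleftrightarrow> smooth_fun \<phi> \<and> compact (closure {x. \<phi> x \<noteq> 0})
      \<and> closure {x. \<phi> x \<noteq> 0} \<subseteq> \<Omega>"

text \<open>Standard normalisation of the Riesz potential of order alpha in R^d (0 < alpha < d);
  I_0 is the identity.\<close>
definition riesz_const :: "nat \<Rightarrow> real \<Rightarrow> real" where
  "riesz_const d \<alpha> = Gamma ((real d - \<alpha>) / 2) / (pi powr (real d / 2) * 2 powr \<alpha> * Gamma (\<alpha> / 2))"

definition riesz_pot :: "real \<Rightarrow> ('a::euclidean_space \<Rightarrow> real) \<Rightarrow> 'a \<Rightarrow> real" where
  "riesz_pot \<alpha> f x = (if \<alpha> = 0 then f x
     else riesz_const DIM('a) \<alpha> * (\<integral>y. f y / norm (x - y) powr (real DIM('a) - \<alpha>) \<partial>lebesgue))"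

definition grad :: "('a::euclidean_space \<Rightarrow> real) \<Rightarrow> 'a \<Rightarrow> 'a" where
  "grad f x = (\<Sum>b\<in>Basis. frechet_derivative f (at x) b *\<^sub>R b)"

definition frac_grad_test :: "real \<Rightarrow> ('a::euclidean_space \<Rightarrow> real) \<Rightarrow> 'a \<Rightarrow> 'a" where
  "frac_grad_test s \<phi> = grad (riesz_pot (1 - s) \<phi>)"

text \<open>(u, G) lies in the closure of the graph of D^s on C_c^infinity(Omega) w.r.t. the
  norm (||f||_p^p + ||D^s f||_p^p)^(1/p): i.e. u \<in> Lambda^{s,p}_0(Omega) with D^s u = G.\<close>
definition Lambda_grad :: "real \<Rightarrow> real \<Rightarrow> 'a::euclidean_space set
      \<Rightarrow> ('a \<Rightarrow> real) \<Rightarrow> ('a \<Rightarrow> 'a) \<Rightarrow> bool" where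
  "Lambda_grad s p \<Omega> u G \<longleftrightarrow> (\<exists>\<phi>. (\<forall>k. test_fun \<Omega> (\<phi> k))
      \<and> Lp_conv p UNIV sequentially \<phi> u
      \<and> Lp_conv p UNIV sequentially (\<lambda>k. frac_grad_test s (\<phi> k)) G)"

definition two_phase_sol :: "real \<Rightarrow> real \<Rightarrow> 'a::euclidean_space set
      \<Rightarrow> ('a \<Rightarrow> real) \<Rightarrow> ('a \<Rightarrow> real) \<Rightarrow> ('a \<Rightarrow> real) \<Rightarrow> ('a \<Rightarrow> real)
      \<Rightarrow> ('a \<Rightarrow> real) \<Rightarrow> ('a \<Rightarrow> 'a) \<Rightarrow> ('a \<Rightarrow> real) \<Rightarrow> ('a \<Rightarrow> real) \<Rightarrow> bool" where
  "two_phase_sol s p \<Omega> f lp lm v u G cg cl \<longleftrightarrow>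
     Lambda_grad s p \<Omega> u G \<and> memLinf \<Omega> cg \<and> memLinf \<Omega> cl
     \<and> (AE x in lebesgue_on \<Omega>. of_bool (u x > v x) \<le> cg x \<and> cg x \<le> of_bool (u x \<ge> v x))
     \<and> (AE x in lebesgue_on \<Omega>. of_bool (u x < v x) \<le> cl x \<and> cl x \<le> of_bool (u x \<le> v x))
     \<and> (\<forall>w H. Lambda_grad s p \<Omega> w H \<longrightarrow>
          (\<integral>x. norm (G x) powr (p - 2) * (G x \<bullet> H x) \<partial>lebesgue)
          + (\<integral>x. (lp x * cg x - lm x * cl x) * w x \<partial>lebesgue_on \<Omega>)
          = (\<integral>x. f x * w x \<partial>lebesgue_on \<Omega>))"

text \<open>The exponent p^#_1; q0 is the fixed number > 1 used when p = d.\<close>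
definition p_sharp1 :: "nat \<Rightarrow> real \<Rightarrow> real \<Rightarrow> real" where
  "p_sharp1 d p q0 = (if p < real d then real d * p / (real d * (p - 1) + p)
                      else if p > real d then 1 else q0)"

end

theory Submission
  imports Defs
begin

lemma markov_aux:
  fixes M :: "'a measure" and g :: "'a \<Rightarrow> real"
  assumes fin: "finite_measure M" and p: "0 < p" and c: "0 < c"
    and g: "g \<in> borel_measurable M"
    and I: "(\<integral>\<^sup>+x. ennreal (norm (g x) powr p) \<partial>M) = ennreal I" and I0: "0 \<le> I"
  shows "c powr p * measure M {x\<in>space M. c \<le> \<bar>g x\<bar>} \<le> I"
proof -
  interpret finite_measure M by fact
  let ?B = "{x\<in>space M. c \<le> \<bar>g x\<bar>}"
  have B: "?B \<in> sets M" using g by measurable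
  have "ennreal (c powr p) * emeasure M ?B = (\<integral>\<^sup>+x. ennreal (c powr p) * indicator ?B x \<partial>M)"
    using B by (simp add: nn_integral_cmult_indicator)
  also have "\<dots> \<le> (\<integral>\<^sup>+x. ennreal (norm (g x) powr p) \<partial>M)"
  proof (rule nn_integral_mono)
    fix x assume "x \<in> space M"
    show "ennreal (c powr p) * indicator ?B x \<le> ennreal (norm (g x) powr p)"
    proof (cases "x \<in> ?B")
      case True
      then have "c powr p \<le> norm (g x) powr p" using p c by (auto intro!: powr_mono2)
      then show ?thesis using True by (simp add: indicator_def)
    qed (use \<open>x \<in> space M\<close> in \<open>auto simp: indicator_def\<close>)
  qed
  finally have "ennreal (c powr p * measure M ?B) \<le> ennreal I"
    using I by (simp add: emeasure_eq_measure ennreal_mult'')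
  then show ?thesis using I0 by (simp add: ennreal_le_iff)
qed

lemma ennreal_lt_real:
  assumes "(X::ennreal) < ennreal c"
  obtains I where "X = ennreal I" "0 \<le> I" "I < c"
proof -
  have "X \<noteq> \<infinity>" using assms by auto
  then obtain I where I: "X = ennreal I" "0 \<le> I" by (cases X) auto
  then have "I < c" using assms by (simp add: ennreal_less_iff)
  then show ?thesis using I that by blast
qed

lemma key:
  fixes M :: "'a measure" and U V :: "nat \<Rightarrow> 'a \<Rightarrow> real" and u0 v0 :: "'a \<Rightarrow> real"
  assumes fin: "finite_measure M" and p: "0 < p"
    and mu0: "u0 \<in> borel_measurable M" and mv0: "v0 \<in> borel_measurable M"
    and mU: "eventually (\<lambda>k. U k \<in> borel_measurable M) sequentially"
    and mV: "eventually (\<lambda>k. V k \<in> borel_measurable M) sequentially"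
    and cU: "(\<lambda>k. \<integral>\<^sup>+x. ennreal (norm (U k x - u0 x) powr p) \<partial>M) \<longlonglongrightarrow> 0"
    and cV: "(\<lambda>k. \<integral>\<^sup>+x. ennreal (norm (V k x - v0 x) powr p) \<partial>M) \<longlonglongrightarrow> 0"
    and null: "emeasure M {x\<in>space M. u0 x = v0 x} = 0"
  shows "(\<lambda>k. emeasure M {x\<in>space M. (V k x < U k x) \<noteq> (v0 x < u0 x)}) \<longlonglongrightarrow> 0"
proof -
  interpret finite_measure M by fact
  define D where "D k = {x\<in>space M. (V k x < U k x) \<noteq> (v0 x < u0 x)}" for k
  define A where "A n = {x\<in>space M. \<bar>u0 x - v0 x\<bar> \<le> 1 / real (Suc n)}" for n
  have Asets: "range A \<subseteq> sets M" unfolding A_def using mu0 mv0 by auto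
  have Adec: "decseq A"
    unfolding A_def decseq_def
    by (auto simp: frac_le elim!: order.trans)
  have AInt: "(\<Inter>i. A i) = {x\<in>space M. u0 x = v0 x}"
  proof (intro set_eqI iffI)
    fix x assume x: "x \<in> (\<Inter>i. A i)"
    then have sx: "x \<in> space M" by (auto simp: A_def)
    have "\<bar>u0 x - v0 x\<bar> \<le> 0"
    proof (rule field_le_epsilon)
      fix e :: real assume "0 < e"
      then obtain n where n: "inverse (real (Suc n)) < e" using reals_Archimedean by blast
      have "\<bar>u0 x - v0 x\<bar> \<le> 1 / real (Suc n)" using x by (auto simp: A_def)
      moreover have "1 / real (Suc n) < e" using n by (simp add: inverse_eq_divide)
      ultimately show "\<bar>u0 x - v0 x\<bar> \<le> 0 + e" by linarith
    qed
    then show "x \<in> {x\<in>space M. u0 x = v0 x}" using sx by simp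
  qed (auto simp: A_def)
  have mA: "(\<lambda>n. measure M (A n)) \<longlonglongrightarrow> 0"
    using finite_Lim_measure_decseq[OF Asets Adec] AInt null by (simp add: measure_def)
  have "(\<lambda>k. measure M (D k)) \<longlonglongrightarrow> 0"
  proof (rule tendstoI)
    fix e :: real assume e: "0 < e"
    have "eventually (\<lambda>n. dist (measure M (A n)) 0 < e / 2) sequentially"
      using tendstoD[OF mA, of "e/2"] e by simp
    then obtain n where n: "measure M (A n) < e / 2"
      by (auto simp: eventually_sequentially)
    define \<delta> where "\<delta> = 1 / real (Suc n)"
    have \<delta>: "0 < \<delta>" by (simp add: \<delta>_def)
    define c where "c = (\<delta> / 2) powr p * (e / 4)"
    have c: "0 < c" using \<delta> e by (simp add: c_def)
    have "eventually (\<lambda>k. (\<integral>\<^sup>+x. ennreal (norm (U k x - u0 x) powr p) \<partial>M) < ennreal c) sequentially"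
      using order_tendstoD(2)[OF cU] c by simp
    moreover have "eventually (\<lambda>k. (\<integral>\<^sup>+x. ennreal (norm (V k x - v0 x) powr p) \<partial>M) < ennreal c) sequentially"
      using order_tendstoD(2)[OF cV] c by simp
    ultimately have ev: "eventually (\<lambda>k. U k \<in> borel_measurable M \<and> V k \<in> borel_measurable M
       \<and> (\<integral>\<^sup>+x. ennreal (norm (U k x - u0 x) powr p) \<partial>M) < ennreal c
       \<and> (\<integral>\<^sup>+x. ennreal (norm (V k x - v0 x) powr p) \<partial>M) < ennreal c) sequentially"
      using mU mV by (simp add: eventually_conj_iff)
    show "eventually (\<lambda>k. dist (measure M (D k)) 0 < e) sequentially"
    proof (rule eventually_mono[OF ev], clarify)
      fix k assume mUk: "U k \<in> borel_measurable M" and mVk: "V k \<in> borel_measurable M"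
        and iU: "(\<integral>\<^sup>+x. ennreal (norm (U k x - u0 x) powr p) \<partial>M) < ennreal c"
        and iV: "(\<integral>\<^sup>+x. ennreal (norm (V k x - v0 x) powr p) \<partial>M) < ennreal c"
      define BU where "BU = {x\<in>space M. \<delta>/2 \<le> \<bar>U k x - u0 x\<bar>}"
      define BV where "BV = {x\<in>space M. \<delta>/2 \<le> \<bar>V k x - v0 x\<bar>}"
      have sBU: "BU \<in> sets M" unfolding BU_def using mUk mu0 by measurable
      have sBV: "BV \<in> sets M" unfolding BV_def using mVk mv0 by measurable
      have sA: "A n \<in> sets M" using Asets by auto
      obtain IU where IU: "(\<integral>\<^sup>+x. ennreal (norm (U k x - u0 x) powr p) \<partial>M) = ennreal IU" "0 \<le> IU" "IU < c"
        using iU by (rule ennreal_lt_real)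
      obtain IV where IV: "(\<integral>\<^sup>+x. ennreal (norm (V k x - v0 x) powr p) \<partial>M) = ennreal IV" "0 \<le> IV" "IV < c"
        using iV by (rule ennreal_lt_real)
      have pos: "0 < (\<delta> / 2) powr p" using \<delta> by simp
      have "(\<delta>/2) powr p * measure M BU \<le> IU"
        unfolding BU_def by (rule markov_aux[OF fin p _ _ IU(1,2)]) (use \<delta> mUk mu0 in auto)
      then have mBU: "measure M BU < e / 4"
        using IU(3) pos unfolding c_def by (smt (verit) mult_less_cancel_left_pos)
      have "(\<delta>/2) powr p * measure M BV \<le> IV"
        unfolding BV_def by (rule markov_aux[OF fin p _ _ IV(1,2)]) (use \<delta> mVk mv0 in auto)
      then have mBV: "measure M BV < e / 4"
        using IV(3) pos unfolding c_def by (smt (verit) mult_less_cancel_left_pos)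
      have sub: "D k \<subseteq> A n \<union> BU \<union> BV"
      proof
        fix x assume x: "x \<in> D k"
        show "x \<in> A n \<union> BU \<union> BV"
        proof (rule ccontr)
          assume "x \<notin> A n \<union> BU \<union> BV"
          then have "\<delta> < \<bar>u0 x - v0 x\<bar>" "\<bar>U k x - u0 x\<bar> < \<delta>/2" "\<bar>V k x - v0 x\<bar> < \<delta>/2"
            using x by (auto simp: A_def BU_def BV_def D_def \<delta>_def)
          moreover have "(V k x < U k x) \<noteq> (v0 x < u0 x)" using x by (simp add: D_def)
          ultimately show False by (cases "v0 x < u0 x") (auto simp: abs_less_iff abs_le_iff abs_if split: if_splits)
        qed
      qed
      have "measure M (D k) \<le> measure M (A n \<union> BU \<union> BV)"
        using sub sA sBU sBV by (intro finite_measure_mono) auto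
      also have "\<dots> \<le> measure M (A n) + measure M BU + measure M BV"
        using sA sBU sBV measure_Un_le[of "A n \<union> BU" M BV] measure_Un_le[of "A n" M BU] by auto
      finally show "dist (measure M (D k)) 0 < e" using n mBU mBV by simp
    qed
  qed
  then have "(\<lambda>k. ennreal (measure M (D k))) \<longlonglongrightarrow> ennreal 0" by (rule tendsto_ennrealI)
  then show ?thesis by (simp add: D_def emeasure_eq_measure)
qed


lemma final_conv:
  fixes \<Omega> :: "'a::euclidean_space set" and U V :: "nat \<Rightarrow> 'a \<Rightarrow> real" and u0 v0 :: "'a \<Rightarrow> real"
  assumes fin: "finite_measure (lebesgue_on \<Omega>)" and r: "1 \<le> r"
    and mu0: "u0 \<in> borel_measurable (lebesgue_on \<Omega>)" and mv0: "v0 \<in> borel_measurable (lebesgue_on \<Omega>)"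
    and mU: "eventually (\<lambda>k. U k \<in> borel_measurable (lebesgue_on \<Omega>)) sequentially"
    and mV: "eventually (\<lambda>k. V k \<in> borel_measurable (lebesgue_on \<Omega>)) sequentially"
    and lim: "(\<lambda>k. emeasure (lebesgue_on \<Omega>) {x\<in>space (lebesgue_on \<Omega>). (V k x < U k x) \<noteq> (v0 x < u0 x)}) \<longlonglongrightarrow> 0"
  shows "Lp_conv r \<Omega> sequentially (\<lambda>k x. of_bool (V k x < U k x) :: 'b::{euclidean_space,zero_neq_one})
           (\<lambda>x. of_bool (v0 x < u0 x))"
proof -
  let ?M = "lebesgue_on \<Omega>"
  interpret finite_measure ?M by fact
  define c where "c = norm (1::'b) powr r"
  have c0: "0 \<le> c" by (simp add: c_def)
  have pt: "norm (of_bool P - of_bool Q :: 'b) powr r = (if P \<noteq> Q then c else 0)" for P Q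
    using r by (cases P; cases Q) (auto simp: c_def)
  have mem: "memLp r \<Omega> (\<lambda>x. of_bool (b x < a x) :: 'b)"
    if ma: "a \<in> borel_measurable ?M" and mb: "b \<in> borel_measurable ?M" for a b :: "'a \<Rightarrow> real"
  proof -
    have m0: "{x \<in> space ?M. b x < a x} \<in> sets ?M" using ma mb by measurable
    have m: "(\<lambda>x. of_bool (b x < a x) :: 'b) \<in> borel_measurable ?M"
      unfolding of_bool_def using ma mb by measurable
    have "integrable ?M (\<lambda>x. norm (of_bool (b x < a x) :: 'b) powr r)"
    proof (rule integrable_const_bound[where B=c])
      show "AE x in ?M. norm (norm (of_bool (b x < a x) :: 'b) powr r) \<le> c"
        using pt[of "b _ < a _" False] c0 by (auto simp: c_def)
      show "(\<lambda>x. norm (of_bool (b x < a x) :: 'b) powr r) \<in> borel_measurable ?M" using m by measurable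
    qed
    then show ?thesis using m by (simp add: memLp_def)
  qed
  have eq: "(\<integral>\<^sup>+x. ennreal (norm (of_bool (V k x < U k x) - of_bool (v0 x < u0 x) :: 'b) powr r) \<partial>?M)
      = ennreal c * emeasure ?M {x\<in>space ?M. (V k x < U k x) \<noteq> (v0 x < u0 x)}"
    if "U k \<in> borel_measurable ?M" "V k \<in> borel_measurable ?M" for k
  proof -
    have S: "{x\<in>space ?M. (V k x < U k x) \<noteq> (v0 x < u0 x)} \<in> sets ?M"
      using that mu0 mv0 by measurable
    have "(\<integral>\<^sup>+x. ennreal (norm (of_bool (V k x < U k x) - of_bool (v0 x < u0 x) :: 'b) powr r) \<partial>?M)
       = (\<integral>\<^sup>+x. ennreal c * indicator {x\<in>space ?M. (V k x < U k x) \<noteq> (v0 x < u0 x)} x \<partial>?M)"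
      by (intro nn_integral_cong) (auto simp: indicator_def pt)
    also have "\<dots> = ennreal c * emeasure ?M {x\<in>space ?M. (V k x < U k x) \<noteq> (v0 x < u0 x)}"
      using S by (simp add: nn_integral_cmult_indicator)
    finally show ?thesis .
  qed
  have ev: "eventually (\<lambda>k. U k \<in> borel_measurable ?M \<and> V k \<in> borel_measurable ?M) sequentially"
    using mU mV by (simp add: eventually_conj_iff)
  have lim2: "(\<lambda>k. ennreal c * emeasure ?M {x\<in>space ?M. (V k x < U k x) \<noteq> (v0 x < u0 x)}) \<longlonglongrightarrow> 0"
    using tendsto_mult_ennreal[OF tendsto_const lim, of "ennreal c"] by simp
  show ?thesis unfolding Lp_conv_def
  proof (intro conjI)
    show "memLp r \<Omega> (\<lambda>x. of_bool (v0 x < u0 x) :: 'b)" using mem mu0 mv0 by blast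
    show "eventually (\<lambda>k. memLp r \<Omega> (\<lambda>x. of_bool (V k x < U k x) :: 'b)) sequentially"
      using ev by (rule eventually_mono) (use mem in blast)
    show "(\<lambda>k. \<integral>\<^sup>+x. ennreal (norm (of_bool (V k x < U k x) - of_bool (v0 x < u0 x) :: 'b) powr r) \<partial>?M) \<longlonglongrightarrow> 0"
    proof (rule Lim_transform_eventually[OF lim2])
      show "eventually (\<lambda>k. ennreal c * emeasure ?M {x\<in>space ?M. (V k x < U k x) \<noteq> (v0 x < u0 x)}
         = (\<integral>\<^sup>+x. ennreal (norm (of_bool (V k x < U k x) - of_bool (v0 x < u0 x) :: 'b) powr r) \<partial>?M)) sequentially"
        using ev by (rule eventually_mono) (use eq in auto)
    qed
  qed
qed

theorem corollary4p2:
  fixes \<Omega> :: "'a::euclidean_space set"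
    and p q0 \<sigma> :: real
    and f lp lm v u cg cl :: "real \<Rightarrow> 'a \<Rightarrow> real"
    and G :: "real \<Rightarrow> 'a \<Rightarrow> 'a"
    and f0 lp0 lm0 v0 u0 cg0 cl0 :: "'a \<Rightarrow> real"
    and G0 :: "'a \<Rightarrow> 'a"
    and sk :: "nat \<Rightarrow> real"
  assumes "open \<Omega>" and "bounded \<Omega>"
    and "1 < p" and "1 < q0" and "p / (p - 1) > p_sharp1 DIM('a) p q0"
    and "0 < \<sigma>" and "\<sigma> < 1"
    and "\<forall>s\<in>{\<sigma><..<1}. memLp (p / (p - 1)) \<Omega> (f s) \<and> memLp (p / (p - 1)) \<Omega> (lp s)
           \<and> memLp (p / (p - 1)) \<Omega> (lm s) \<and> memLp p \<Omega> (v s)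
           \<and> (AE x in lebesgue_on \<Omega>. lp s x \<ge> 0 \<and> lm s x \<ge> 0)"
    and "Lp_conv (p / (p - 1)) \<Omega> (at_left 1) f f0"
    and "Lp_conv (p / (p - 1)) \<Omega> (at_left 1) lp lp0"
    and "Lp_conv (p / (p - 1)) \<Omega> (at_left 1) lm lm0"
    and "Lp_conv p \<Omega> (at_left 1) v v0"
    and "\<forall>s\<in>{\<sigma><..<1}. two_phase_sol s p \<Omega> (f s) (lp s) (lm s) (v s) (u s) (G s) (cg s) (cl s)"
    and "\<forall>k. sk k \<in> {\<sigma><..<1}" and "sk \<longlonglongrightarrow> 1"
    and "Lp_conv p \<Omega> sequentially (\<lambda>k. u (sk k)) u0"
    and "Lp_conv p UNIV sequentially (\<lambda>k. G (sk k)) G0"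
    and "two_phase_sol 1 p \<Omega> f0 lp0 lm0 v0 u0 G0 cg0 cl0"
    and "emeasure lebesgue {x \<in> \<Omega>. u0 x = v0 x} = 0"
  shows "\<forall>r. 1 \<le> r \<longrightarrow>
           Lp_conv r \<Omega> sequentially (\<lambda>k x. of_bool (u (sk k) x > v (sk k) x)) (\<lambda>x. of_bool (u0 x > v0 x))
         \<and> Lp_conv r \<Omega> sequentially (\<lambda>k x. of_bool (u (sk k) x < v (sk k) x)) (\<lambda>x. of_bool (u0 x < v0 x))"
  proof (intro allI impI)
  fix r :: real assume r: "1 \<le> r"
  let ?M = "lebesgue_on \<Omega>"
  have OmL: "\<Omega> \<in> lmeasurable" using assms(1,2) by (rule lmeasurable_open[rotated])
  have Oms: "\<Omega> \<inter> space lebesgue \<in> sets lebesgue" using OmL by auto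
  have fin: "finite_measure ?M"
    by (rule finite_measureI) (use OmL Oms in \<open>auto simp: fmeasurable_def emeasure_restrict_space\<close>)
  have p0: "0 < p" using assms(3) by simp
  have Lu: "Lp_conv p \<Omega> sequentially (\<lambda>k. u (sk k)) u0" by fact
  have Lv: "Lp_conv p \<Omega> (at_left 1) v v0" by fact
  have mu0: "u0 \<in> borel_measurable ?M" using Lu by (simp add: Lp_conv_def memLp_def)
  have mv0: "v0 \<in> borel_measurable ?M" using Lv by (simp add: Lp_conv_def memLp_def)
  have mU: "eventually (\<lambda>k. u (sk k) \<in> borel_measurable ?M) sequentially"
    using Lu unfolding Lp_conv_def memLp_def by (auto elim: eventually_mono)
  have mV: "eventually (\<lambda>k. v (sk k) \<in> borel_measurable ?M) sequentially"
  proof (intro always_eventually allI)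
    fix k
    have "sk k \<in> {\<sigma><..<1}" using assms(14) by blast
    then have "memLp p \<Omega> (v (sk k))" using assms(8) by blast
    then show "v (sk k) \<in> borel_measurable ?M" by (simp add: memLp_def)
  qed
  have cU: "(\<lambda>k. \<integral>\<^sup>+x. ennreal (norm (u (sk k) x - u0 x) powr p) \<partial>?M) \<longlonglongrightarrow> 0"
    using Lu by (simp add: Lp_conv_def)
  have skl: "filterlim sk (at_left 1) sequentially"
    using assms(14,15) by (intro tendsto_imp_filterlim_at_left) auto
  have cV: "(\<lambda>k. \<integral>\<^sup>+x. ennreal (norm (v (sk k) x - v0 x) powr p) \<partial>?M) \<longlonglongrightarrow> 0"
  proof -
    have "((\<lambda>s. \<integral>\<^sup>+x. ennreal (norm (v s x - v0 x) powr p) \<partial>?M) \<longlongrightarrow> 0) (at_left 1)"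
      using conjunct2[OF conjunct2[OF Lv[unfolded Lp_conv_def]]] .
    from filterlim_compose[OF this skl] show ?thesis .
  qed
  have null: "emeasure ?M {x\<in>space ?M. u0 x = v0 x} = 0"
    using assms(19) Oms by (simp add: emeasure_restrict_space)
  have null2: "emeasure ?M {x\<in>space ?M. v0 x = u0 x} = 0"
  proof -
    have "{x\<in>space ?M. v0 x = u0 x} = {x\<in>space ?M. u0 x = v0 x}" by auto
    then show ?thesis using null by simp
  qed
  have k1: "(\<lambda>k. emeasure ?M {x\<in>space ?M. (v (sk k) x < u (sk k) x) \<noteq> (v0 x < u0 x)}) \<longlonglongrightarrow> 0"
    by (rule key[OF fin p0 mu0 mv0 mU mV cU cV null])
  have k2: "(\<lambda>k. emeasure ?M {x\<in>space ?M. (u (sk k) x < v (sk k) x) \<noteq> (u0 x < v0 x)}) \<longlonglongrightarrow> 0"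
    by (rule key[OF fin p0 mv0 mu0 mV mU cV cU null2])
  show "Lp_conv r \<Omega> sequentially (\<lambda>k x. of_bool (u (sk k) x > v (sk k) x)) (\<lambda>x. of_bool (u0 x > v0 x))
         \<and> Lp_conv r \<Omega> sequentially (\<lambda>k x. of_bool (u (sk k) x < v (sk k) x)) (\<lambda>x. of_bool (u0 x < v0 x))"
    by (intro conjI final_conv[OF fin r mu0 mv0 mU mV k1] final_conv[OF fin r mv0 mu0 mV mU k2])
qed

end
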